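(* Let $p(1),\dots,p(K)\in[0,1]$, let $\mathbb F_i$ be the CDF of $\mathrm{Bern}(p(i))$, and for $\alpha\in\Delta^{K-1}$ write $\mathbb F_\alpha=\sum_i\alpha(i)\mathbb F_i$. Let $h(u)=\sqrt u-u$. Then: (1) for all $\alpha,\beta\in\Delta^{K-1}$, $U_h(\mathbb F_\alpha)-U_h(\mathbb F_\beta)\le\|\mathbb F_\alpha-\mathbb F_\beta\|_{\mathrm W}^{1/2}$; (2) let $\alpha^\star\in\arg\max_{\alpha\in\Delta^{K-1}}U_h(\mathbb F_\alpha)$ and $\mathbb F^\star=\mathbb F_{\alpha^\star}$. If $\max_i p(i)>\tfrac14$ and $\min_i p(i)<\tfrac14$, then $U_h(\mathbb F^\star)-U_h(\mathbb F_\alpha)\le\|\mathbb F^\star-\mathbb F_\alpha\|_{\mathrm W}$ for all $\alpha\in\Delta^{K-1}$; in all cases, $U_h(\mathbb F^\star)-U_h(\mathbb F_\alpha)\le\|\mathbb F^\star-\mathbb F_\alpha\|_{\mathrm W}^{1/2}$ for all $\alpha$.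
   Context: For a CDF $Q$ of a nonnegative random variable, $U_h(Q)=\int_0^\infty h(1-Q(x))\,dx$. $\|G-S\|_{\mathrm W}=\int|G(x)-S(x)|dx$ is the 1-Wasserstein distance. $\Delta^{K-1}$ is the probability simplex in $\mathbb R^K$. *)

theory Defs
  imports "HOL-Analysis.Analysis"
begin

definition bern_cdf :: "real \<Rightarrow> real \<Rightarrow> real" where
  "bern_cdf p x = (if x < 0 then 0 else if x < 1 then 1 - p else 1)"

definition prob_simplex :: "nat \<Rightarrow> (nat \<Rightarrow> real) set" where
  "prob_simplex K = {\<alpha>. (\<forall>i<K. 0 \<le> \<alpha> i) \<and> (\<Sum>i<K. \<alpha> i) = 1}"

definition mix_cdf :: "nat \<Rightarrow> (nat \<Rightarrow> real) \<Rightarrow> (nat \<Rightarrow> real) \<Rightarrow> real \<Rightarrow> real" where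
  "mix_cdf K p \<alpha> x = (\<Sum>i<K. \<alpha> i * bern_cdf (p i) x)"

definition hfun :: "real \<Rightarrow> real" where
  "hfun u = sqrt u - u"

definition U_h :: "(real \<Rightarrow> real) \<Rightarrow> (real \<Rightarrow> real) \<Rightarrow> real" where
  "U_h h Q = integral {0..} (\<lambda>x. h (1 - Q x))"

definition wass :: "(real \<Rightarrow> real) \<Rightarrow> (real \<Rightarrow> real) \<Rightarrow> real" where
  "wass G S = integral UNIV (\<lambda>x. \<bar>G x - S x\<bar>)"

end

theory Submission
  imports Defs
begin

lemma step_int:
  fixes c :: real and T :: "real set"
  assumes "{0..1} \<subseteq> T"
  shows "((\<lambda>x::real. if 0 \<le> x \<and> x < 1 then c else 0) has_integral c) T"
proof -
  have "((\<lambda>x::real. c) has_integral c) {0..1}"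
    using has_integral_const_real[of c 0 1] by simp
  hence r: "((\<lambda>x. if x \<in> {0..1} then c else 0) has_integral c) T"
    by (rule iffD2[OF has_integral_restrict[OF assms]])
  have n: "negligible {1::real}" by simp
  show ?thesis
    by (rule has_integral_spike[OF n _ r]) auto
qed

lemma step_int':
  fixes T :: "real set" and c :: real
  assumes "{0..1} \<subseteq> T" and "\<And>x. x \<in> T \<Longrightarrow> f x = (if 0 \<le> x \<and> x < 1 then c else 0)"
  shows "integral T f = c"
proof -
  have "(f has_integral c) T"
    by (rule has_integral_spike[OF negligible_empty _ step_int[OF assms(1), of c]]) (use assms(2) in auto)
  thus ?thesis by blast
qed

definition qq :: "nat \<Rightarrow> (nat \<Rightarrow> real) \<Rightarrow> (nat \<Rightarrow> real) \<Rightarrow> real" where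
  "qq K p a = (\<Sum>i<K. a i * p i)"

lemma mix_eq:
  assumes "a \<in> prob_simplex K"
  shows "mix_cdf K p a x = bern_cdf (qq K p a) x"
proof -
  have s: "(\<Sum>i<K. a i) = 1" using assms by (simp add: prob_simplex_def)
  show ?thesis
    unfolding mix_cdf_def bern_cdf_def qq_def
    by (auto simp: s algebra_simps sum_subtractf sum_distrib_left[symmetric])
qed

lemma U_eq:
  assumes "a \<in> prob_simplex K"
  shows "U_h hfun (mix_cdf K p a) = hfun (qq K p a)"
  unfolding U_h_def mix_eq[OF assms]
  by (rule step_int') (auto simp: bern_cdf_def hfun_def)

lemma W_eq:
  assumes "a \<in> prob_simplex K" "b \<in> prob_simplex K"
  shows "wass (mix_cdf K p a) (mix_cdf K p b) = \<bar>qq K p a - qq K p b\<bar>"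
  unfolding wass_def mix_eq[OF assms(1)] mix_eq[OF assms(2)]
  by (rule step_int') (auto simp: bern_cdf_def)

lemma q_range:
  assumes "a \<in> prob_simplex K" "\<And>i. i < K \<Longrightarrow> 0 \<le> p i \<and> p i \<le> 1"
  shows "0 \<le> qq K p a \<and> qq K p a \<le> 1"
proof -
  have a0: "\<And>i. i<K \<Longrightarrow> 0 \<le> a i" and s: "(\<Sum>i<K. a i) = 1"
    using assms(1) by (auto simp: prob_simplex_def)
  have "0 \<le> qq K p a" unfolding qq_def using a0 assms(2) by (intro sum_nonneg) auto
  moreover have "qq K p a \<le> (\<Sum>i<K. a i)" unfolding qq_def
    using a0 assms(2) by (intro sum_mono) (simp add: mult_left_le)
  ultimately show ?thesis using s by simp
qed

lemma h_sqrt: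
  assumes "0 \<le> a" "a \<le> 1" "0 \<le> b" "b \<le> 1"
  shows "hfun a - hfun b \<le> sqrt \<bar>a - b\<bar>"
proof (cases "b \<le> a")
  case True
  have "sqrt a \<le> sqrt (a - b) + sqrt b"
  proof -
    have "sqrt a = sqrt ((a-b) + b)" by simp
    also have "\<dots> \<le> sqrt (a-b) + sqrt b" using True assms by (intro sqrt_add_le_add_sqrt) auto
    finally show ?thesis .
  qed
  thus ?thesis using True by (simp add: hfun_def)
next
  case False
  have d: "0 \<le> b - a" "b - a \<le> 1" using False assms by auto
  have "b - a = sqrt (b - a) * sqrt (b - a)" using d by simp
  also have "\<dots> \<le> sqrt (b - a) * 1" using d by (intro mult_left_mono) auto
  finally have "b - a \<le> sqrt (b - a)" by simp
  moreover have "sqrt a \<le> sqrt b" using False by simp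
  moreover have e: "\<bar>a - b\<bar> = b - a" using False by simp
  ultimately show ?thesis unfolding hfun_def e by linarith
qed

lemma h_quarter: "hfun (1/4) = 1/4"
proof -
  have "sqrt (1/4::real) = 1/2" by (simp add: real_sqrt_divide)
  thus ?thesis by (simp add: hfun_def)
qed

lemma h_sq: assumes "0 \<le> q" shows "1/4 - hfun q = (sqrt q - 1/2)^2"
  using assms by (simp add: hfun_def power2_eq_square algebra_simps)

lemma h_lip: assumes "0 \<le> q" shows "hfun (1/4) - hfun q \<le> \<bar>1/4 - q\<bar>"
proof -
  have s: "sqrt q * sqrt q = q" using assms by simp
  have "hfun (1/4) - hfun q = \<bar>sqrt q - 1/2\<bar> * \<bar>sqrt q - 1/2\<bar>"
    using h_sq[OF assms] h_quarter by (simp add: power2_eq_square)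
  also have "\<dots> \<le> \<bar>sqrt q - 1/2\<bar> * \<bar>sqrt q + 1/2\<bar>"
  proof (intro mult_left_mono)
    show "\<bar>sqrt q - 1/2\<bar> \<le> \<bar>sqrt q + 1/2\<bar>" using real_sqrt_ge_zero[OF assms] by linarith
  qed simp
  also have "\<dots> = \<bar>(sqrt q - 1/2) * (sqrt q + 1/2)\<bar>" by (simp add: abs_mult)
  also have "(sqrt q - 1/2) * (sqrt q + 1/2) = q - 1/4" using s by (simp add: algebra_simps)
  finally show ?thesis by simp
qed

lemma h_max_eq: assumes "0 \<le> q" "1/4 \<le> hfun q" shows "q = 1/4"
proof -
  have "(sqrt q - 1/2)^2 \<le> 0" using h_sq[OF assms(1)] assms(2) by linarith
  hence "sqrt q - 1/2 = 0" by (metis power2_eq_square power2_less_eq_zero_iff)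
  hence "sqrt q = 1/2" by linarith
  moreover have "q = sqrt q * sqrt q" using assms(1) by simp
  ultimately have "q = 1/2 * (1/2)" by metis
  thus ?thesis by simp
qed

lemma achieve:
  assumes "i < K" "j < K" "p j < 1/4" "1/4 < p i"
  shows "\<exists>b\<in>prob_simplex K. qq K p b = 1/4"
proof -
  define t where "t = (1/4 - p j) / (p i - p j)"
  have ij: "i \<noteq> j" using assms by auto
  have d: "p i - p j > 0" using assms by simp
  have t0: "0 \<le> t" "t \<le> 1" unfolding t_def using assms d by (auto simp: field_simps)
  define b where "b = (\<lambda>k. t * (if k = i then 1 else 0) + (1 - t) * (if k = j then 1 else 0))"
  have "(\<Sum>k<K. b k) = t + (1 - t)"
    unfolding b_def using assms by (simp add: sum.distrib sum_distrib_left[symmetric])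
  moreover have "\<forall>k<K. 0 \<le> b k" unfolding b_def using t0 by auto
  ultimately have "b \<in> prob_simplex K" by (simp add: prob_simplex_def)
  moreover have "qq K p b = t * p i + (1 - t) * p j"
  proof -
    have "\<And>k. b k * p k = t * (if k = i then p k else 0) + (1 - t) * (if k = j then p k else 0)"
      unfolding b_def by (simp add: algebra_simps)
    hence "qq K p b = (\<Sum>k<K. t * (if k = i then p k else 0) + (1 - t) * (if k = j then p k else 0))"
      unfolding qq_def by simp
    also have "\<dots> = t * p i + (1 - t) * p j"
      using assms by (simp add: sum.distrib sum_distrib_left[symmetric])
    finally show ?thesis .
  qed
  moreover have "t * p i + (1 - t) * p j = 1/4"
  proof -
    have "t * (p i - p j) = 1/4 - p j" unfolding t_def using d by simp
    thus ?thesis by (simp add: algebra_simps)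
  qed
  ultimately show ?thesis by auto
qed

theorem mainTheorem6:
  fixes K :: nat and p :: "nat \<Rightarrow> real"
  assumes "\<And>i. i < K \<Longrightarrow> 0 \<le> p i \<and> p i \<le> 1"
  shows "(\<forall>\<alpha>\<in>prob_simplex K. \<forall>\<beta>\<in>prob_simplex K.
            U_h hfun (mix_cdf K p \<alpha>) - U_h hfun (mix_cdf K p \<beta>)
              \<le> sqrt (wass (mix_cdf K p \<alpha>) (mix_cdf K p \<beta>)))
       \<and> (\<forall>\<alpha>s. \<alpha>s \<in> prob_simplex K \<and>
              (\<forall>\<alpha>\<in>prob_simplex K. U_h hfun (mix_cdf K p \<alpha>) \<le> U_h hfun (mix_cdf K p \<alpha>s)) \<longrightarrow>
            ((Max (p ` {..<K}) > 1/4 \<and> Min (p ` {..<K}) < 1/4 \<longrightarrow>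
               (\<forall>\<alpha>\<in>prob_simplex K. U_h hfun (mix_cdf K p \<alpha>s) - U_h hfun (mix_cdf K p \<alpha>)
                  \<le> wass (mix_cdf K p \<alpha>s) (mix_cdf K p \<alpha>)))
             \<and> (\<forall>\<alpha>\<in>prob_simplex K. U_h hfun (mix_cdf K p \<alpha>s) - U_h hfun (mix_cdf K p \<alpha>)
                  \<le> sqrt (wass (mix_cdf K p \<alpha>s) (mix_cdf K p \<alpha>)))))"
proof -
  have P1: "\<forall>\<alpha>\<in>prob_simplex K. \<forall>\<beta>\<in>prob_simplex K.
            U_h hfun (mix_cdf K p \<alpha>) - U_h hfun (mix_cdf K p \<beta>)
              \<le> sqrt (wass (mix_cdf K p \<alpha>) (mix_cdf K p \<beta>))"
  proof (intro ballI)
    fix a b assume a: "a \<in> prob_simplex K" and b: "b \<in> prob_simplex K"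
    show "U_h hfun (mix_cdf K p a) - U_h hfun (mix_cdf K p b)
              \<le> sqrt (wass (mix_cdf K p a) (mix_cdf K p b))"
      unfolding U_eq[OF a] U_eq[OF b] W_eq[OF a b]
      using q_range[OF a assms] q_range[OF b assms] by (intro h_sqrt) auto
  qed
  show ?thesis
  proof (intro conjI allI impI)
    show "\<forall>\<alpha>\<in>prob_simplex K. \<forall>\<beta>\<in>prob_simplex K.
            U_h hfun (mix_cdf K p \<alpha>) - U_h hfun (mix_cdf K p \<beta>)
              \<le> sqrt (wass (mix_cdf K p \<alpha>) (mix_cdf K p \<beta>))" by (rule P1)
  next
    fix as assume H: "as \<in> prob_simplex K \<and>
              (\<forall>\<alpha>\<in>prob_simplex K. U_h hfun (mix_cdf K p \<alpha>) \<le> U_h hfun (mix_cdf K p as))"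
    thus "\<forall>\<alpha>\<in>prob_simplex K. U_h hfun (mix_cdf K p as) - U_h hfun (mix_cdf K p \<alpha>)
                  \<le> sqrt (wass (mix_cdf K p as) (mix_cdf K p \<alpha>))" using P1 by blast
  next
    fix as assume H: "as \<in> prob_simplex K \<and>
              (\<forall>\<alpha>\<in>prob_simplex K. U_h hfun (mix_cdf K p \<alpha>) \<le> U_h hfun (mix_cdf K p as))"
      and C: "Max (p ` {..<K}) > 1/4 \<and> Min (p ` {..<K}) < 1/4"
    have as: "as \<in> prob_simplex K" using H by blast
    have "K \<noteq> 0"
    proof
      assume "K = 0" thus False using as by (simp add: prob_simplex_def)
    qed
    hence ne: "p ` {..<K} \<noteq> {}" by auto
    obtain i where i: "i < K" "p i = Max (p ` {..<K})"
      using Max_in[OF _ ne] by auto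
    obtain j where j: "j < K" "p j = Min (p ` {..<K})"
      using Min_in[OF _ ne] by auto
    have pij: "p j < 1/4" "1/4 < p i" using i j C by auto
    obtain b where b: "b \<in> prob_simplex K" "qq K p b = 1/4"
      using achieve[OF i(1) j(1) pij] by blast
    have qs: "0 \<le> qq K p as" using q_range[OF as assms] by auto
    have "1/4 \<le> hfun (qq K p as)"
      using H b U_eq[OF b(1)] U_eq[OF as] h_quarter by metis
    hence qs4: "qq K p as = 1/4" using h_max_eq[OF qs] by simp
    show "\<forall>\<alpha>\<in>prob_simplex K. U_h hfun (mix_cdf K p as) - U_h hfun (mix_cdf K p \<alpha>)
                  \<le> wass (mix_cdf K p as) (mix_cdf K p \<alpha>)"
    proof
      fix a assume a: "a \<in> prob_simplex K"
      show "U_h hfun (mix_cdf K p as) - U_h hfun (mix_cdf K p a)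
                  \<le> wass (mix_cdf K p as) (mix_cdf K p a)"
        unfolding U_eq[OF a] U_eq[OF as] W_eq[OF as a] qs4
        using h_lip q_range[OF a assms] by auto
    qed
  qed
qed

end
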